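(* There exists a sequence of natural numbers $B'_1,B'_2,B'_3,\dots$ such that for every finite set $\Omega$, every $A\subseteq\Omega$, and all natural numbers $n,k$, every exact $(n,k)$-cover of $(A,\Omega)$ with $n>B'_{|\Omega|}$ or $k>B'_{|\Omega|}$ is decomposable.
   Context: Let $\Omega$ be a finite set and $A\subseteq\Omega$. An exact $(n,k)$-cover of $(A,\Omega)$ is a finite multiset $C$ of subsets of $\Omega$ (repetitions allowed) such that every element of $A$ belongs to exactly $n+k$ members of $C$ (counted with multiplicity) and every element of $\Omega\setminus A$ belongs to exactly $k$ members of $C$. An exact $(n,k)$-cover $C$ of $(A,\Omega)$ is decomposable if $C$ can be partitioned (as a multiset) into two nonempty submultisets $C_1,C_2$ such that $C_1$ is an exact $(n_1,k_1)$-cover and $C_2$ is an exact $(n_2,k_2)$-cover of $(A,\Omega)$, with $n=n_1+n_2$ and $k=k_1+k_2$. *)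

theory Defs
  imports Main "HOL-Library.Multiset"
begin

definition cover_mult :: "'a set multiset \<Rightarrow> 'a \<Rightarrow> nat" where
  "cover_mult C x = size (filter_mset (\<lambda>S. x \<in> S) C)"

definition exact_cover :: "nat \<Rightarrow> nat \<Rightarrow> 'a set \<Rightarrow> 'a set \<Rightarrow> 'a set multiset \<Rightarrow> bool" where
  "exact_cover n k A \<Omega> C \<longleftrightarrow>
     (\<forall>S\<in>#C. S \<subseteq> \<Omega>) \<and>
     (\<forall>x\<in>A. cover_mult C x = n + k) \<and>
     (\<forall>x\<in>\<Omega> - A. cover_mult C x = k)"

definition decomposable :: "nat \<Rightarrow> nat \<Rightarrow> 'a set \<Rightarrow> 'a set \<Rightarrow> 'a set multiset \<Rightarrow> bool" where
  "decomposable n k A \<Omega> C \<longleftrightarrow>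
     (\<exists>C1 C2 n1 n2 k1 k2. C = C1 + C2 \<and> C1 \<noteq> {#} \<and> C2 \<noteq> {#} \<and>
        exact_cover n1 k1 A \<Omega> C1 \<and> exact_cover n2 k2 A \<Omega> C2 \<and>
        n = n1 + n2 \<and> k = k1 + k2)"

end

theory Submission
  imports Defs Complex_Main
begin

lemma nat_mono_subseq:
  fixes u :: "nat \<Rightarrow> nat"
  shows "\<exists>f::nat\<Rightarrow>nat. strict_mono f \<and> mono (\<lambda>n. u (f n))"
proof -
  obtain f :: "nat \<Rightarrow> nat" where f: "strict_mono f" "monoseq (\<lambda>n. u (f n))" using seq_monosub by blast
  show ?thesis
  proof (cases "\<forall>m n. m \<le> n \<longrightarrow> u (f m) \<le> u (f n)")
    case True
    then show ?thesis using f(1) by (intro exI[of _ f]) (auto simp: mono_def)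
  next
    case False
    then have dec: "\<And>m n. m \<le> n \<Longrightarrow> u (f n) \<le> u (f m)" using f(2) by (auto simp: monoseq_def)
    define a where "a = (LEAST a. a \<in> range (\<lambda>n. u (f n)))"
    have "a \<in> range (\<lambda>n. u (f n))" unfolding a_def by (rule LeastI[of _ "u (f 0)"]) auto
    then obtain N where N: "u (f N) = a" by auto
    have le: "\<And>n. a \<le> u (f n)" unfolding a_def by (rule Least_le) auto
    have const: "\<And>n. u (f (n + N)) = a" using dec le N by (metis le_add2 le_antisym)
    have "strict_mono (\<lambda>n. f (n + N))" using f(1) by (auto simp: strict_mono_def)
    moreover have "mono (\<lambda>n. u (f (n + N)))" using const by (auto simp: mono_def)
    ultimately show ?thesis by blast
  qed
qed

lemma dickson:
  fixes g :: "'i \<Rightarrow> 'x \<Rightarrow> nat"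
  assumes "finite I"
  shows "\<exists>f::nat\<Rightarrow>nat. strict_mono f \<and> (\<forall>i\<in>I. mono (\<lambda>n. g i (s (f n))))"
  using assms
proof (induction I arbitrary: s rule: finite_induct)
  case empty
  show ?case by (rule exI[of _ id]) (auto simp: strict_mono_def)
next
  case (insert i I)
  obtain f1 :: "nat \<Rightarrow> nat" where f1: "strict_mono f1" "\<forall>j\<in>I. mono (\<lambda>n. g j (s (f1 n)))" using insert.IH[of s] by blast
  obtain f2 :: "nat \<Rightarrow> nat" where f2: "strict_mono f2" "mono (\<lambda>n. g i (s (f1 (f2 n))))"
    using nat_mono_subseq[of "\<lambda>n. g i (s (f1 n))"] by blast
  have "strict_mono (f1 \<circ> f2)" using f1(1) f2(1) by (simp add: strict_mono_def)
  moreover have "\<forall>j\<in>insert i I. mono (\<lambda>n. g j (s ((f1 \<circ> f2) n)))"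
  proof
    fix j assume "j \<in> insert i I"
    then show "mono (\<lambda>n. g j (s ((f1 \<circ> f2) n)))"
    proof
      assume "j = i" then show ?thesis using f2 by simp
    next
      assume "j \<in> I"
      then have m: "mono (\<lambda>n. g j (s (f1 n)))" using f1 by blast
      have "mono f2" using f2(1) strict_mono_mono by blast
      then show ?thesis using m by (auto simp: mono_def)
    qed
  qed
  ultimately show ?case by blast
qed

lemma cover_mult_diff:
  assumes "C0 \<subseteq># C1"
  shows "cover_mult (C1 - C0) x = cover_mult C1 x - cover_mult C0 x"
  unfolding cover_mult_def
  by (metis assms multiset_filter_mono size_Diff_submset filter_diff_mset)

lemma key:
  assumes "A \<noteq> {}" "exact_cover n0 k0 A \<Omega> C0" "exact_cover n1 k1 A \<Omega> C1"
    "\<not> decomposable n1 k1 A \<Omega> C1" "C0 \<noteq> {#}" "n0 \<le> n1" "k0 \<le> k1" "C0 \<subseteq># C1"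
  shows "(n0, k0, C0) = (n1, k1, C1)"
proof (rule ccontr)
  assume ne: "(n0, k0, C0) \<noteq> (n1, k1, C1)"
  obtain a where a: "a \<in> A" using assms(1) by blast
  have C2ne: "C1 - C0 \<noteq> {#}"
  proof
    assume "C1 - C0 = {#}"
    then have eq: "C1 = C0" using assms(8) by (metis subset_mset.add_diff_inverse add_0_right)
    then have "n0 + k0 = n1 + k1" using assms(2,3) a unfolding exact_cover_def by auto
    then show False using ne eq assms(6,7) by auto
  qed
  have ex: "exact_cover (n1 - n0) (k1 - k0) A \<Omega> (C1 - C0)"
    using assms(2,3,6,7) unfolding exact_cover_def cover_mult_diff[OF assms(8)]
    by (auto dest: in_diffD)
  have "decomposable n1 k1 A \<Omega> C1"
    unfolding decomposable_def
    apply (rule exI[of _ C0], rule exI[of _ "C1 - C0"], rule exI[of _ n0], rule exI[of _ "n1 - n0"],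
        rule exI[of _ k0], rule exI[of _ "k1 - k0"])
    using assms ex C2ne by (auto simp: subset_mset.add_diff_inverse)
  then show False using assms(4) by blast
qed

lemma core:
  fixes \<Omega> :: "'a set"
  assumes "finite \<Omega>" "A \<noteq> {}"
  shows "\<exists>b. \<forall>n k C. exact_cover n k A \<Omega> C \<longrightarrow> \<not> decomposable n k A \<Omega> C \<longrightarrow> n \<le> b \<and> k \<le> b"
proof -
  define X where "X = {(n, k, C). exact_cover n k A \<Omega> C \<and> \<not> decomposable n k A \<Omega> C \<and> C \<noteq> {#}}"
  have fin: "finite X"
  proof (rule ccontr)
    assume "infinite X"
    then obtain s :: "nat \<Rightarrow> nat \<times> nat \<times> 'a set multiset" where s: "inj s" "range s \<subseteq> X"
      using infinite_countable_subset by blast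
    define g :: "'a set + bool \<Rightarrow> nat \<times> nat \<times> 'a set multiset \<Rightarrow> nat" where
      "g = case_sum (\<lambda>S x. count (snd (snd x)) S) (\<lambda>b x. if b then fst x else fst (snd x))"
    define I where "I = Inl ` Pow \<Omega> \<union> Inr ` (UNIV :: bool set)"
    have "finite I" unfolding I_def using assms(1) by auto
    then obtain f :: "nat \<Rightarrow> nat" where f: "strict_mono f" "\<forall>i\<in>I. mono (\<lambda>n. g i (s (f n)))"
      using dickson by blast
    obtain n0 k0 C0 where x0: "s (f 0) = (n0, k0, C0)" by (metis prod_cases3)
    obtain n1 k1 C1 where x1: "s (f 1) = (n1, k1, C1)" by (metis prod_cases3)
    have le: "\<And>i. i \<in> I \<Longrightarrow> g i (s (f 0)) \<le> g i (s (f 1))"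
      using f(2) by (auto simp: mono_def)
    have X0: "(n0, k0, C0) \<in> X" and X1: "(n1, k1, C1) \<in> X" using s(2) x0 x1 by (metis range_subsetD)+
    have iT: "Inr True \<in> I" and iF: "Inr False \<in> I" unfolding I_def by auto
    have nle: "n0 \<le> n1" using le[OF iT] x0 x1 by (simp add: g_def I_def)
    have kle: "k0 \<le> k1" using le[OF iF] x0 x1 by (simp add: g_def)
    have sub: "C0 \<subseteq># C1"
      unfolding subseteq_mset_def
    proof
      fix S
      show "count C0 S \<le> count C1 S"
      proof (cases "S \<subseteq> \<Omega>")
        case True
        then have "Inl S \<in> I" unfolding I_def by auto
        then show ?thesis using le x0 x1 by (fastforce simp: g_def)
      next
        case False
        then have "S \<notin># C0" using X0 unfolding X_def exact_cover_def by auto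
        then show ?thesis by (simp add: not_in_iff)
      qed
    qed
    have "(n0, k0, C0) = (n1, k1, C1)"
      using key[OF assms(2) _ _ _ _ nle kle sub] X0 X1 unfolding X_def by auto
    then have "s (f 0) = s (f 1)" using x0 x1 by simp
    then have "f 0 = f 1" using s(1) by (simp add: inj_eq)
    then show False using f(1) by (metis strict_mono_eq zero_neq_one)
  qed
  define b where "b = (\<Sum>x\<in>X. fst x + fst (snd x))"
  have "\<forall>n k C. exact_cover n k A \<Omega> C \<longrightarrow> \<not> decomposable n k A \<Omega> C \<longrightarrow> n \<le> b \<and> k \<le> b"
  proof (intro allI impI)
    fix n k C assume h: "exact_cover n k A \<Omega> C" "\<not> decomposable n k A \<Omega> C"
    show "n \<le> b \<and> k \<le> b"
    proof (cases "C = {#}")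
      case True
      obtain a where "a \<in> A" using assms(2) by blast
      then have "n + k = 0" using h(1) True unfolding exact_cover_def cover_mult_def by auto
      then show ?thesis by simp
    next
      case False
      then have "(n, k, C) \<in> X" using h unfolding X_def by auto
      then have "fst (n, k, C) + fst (snd (n, k, C)) \<le> b"
        unfolding b_def by (rule member_le_sum) (use fin in auto)
      then show ?thesis by simp
    qed
  qed
  then show ?thesis by blast
qed

lemma cover_mult_image:
  assumes "inj_on h X" "\<forall>S\<in>#C. S \<subseteq> X" "x \<in> X"
  shows "cover_mult (image_mset (image h) C) (h x) = cover_mult C x"
proof -
  have "filter_mset (\<lambda>S. h x \<in> h ` S) C = filter_mset (\<lambda>S. x \<in> S) C"
    by (rule filter_mset_cong) (use assms in \<open>auto simp: inj_on_image_mem_iff\<close>)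
  then show ?thesis
    unfolding cover_mult_def filter_mset_image_mset by simp
qed

lemma transfer:
  assumes "bij_betw h X Y" "A \<subseteq> X" "exact_cover n k A X C"
  shows "exact_cover n k (h ` A) Y (image_mset (image h) C)"
proof -
  have inj: "inj_on h X" and Y: "h ` X = Y" using assms(1) by (auto simp: bij_betw_def)
  have sub: "\<forall>S\<in>#C. S \<subseteq> X" using assms(3) unfolding exact_cover_def by auto
  show ?thesis
    unfolding exact_cover_def
  proof (intro conjI ballI)
    fix T assume "T \<in># image_mset (image h) C"
    then show "T \<subseteq> Y" using sub Y by auto
  next
    fix y assume "y \<in> h ` A"
    then obtain x where "x \<in> A" "y = h x" by auto
    then show "cover_mult (image_mset (image h) C) y = n + k"
      using cover_mult_image[OF inj sub] assms(2,3) unfolding exact_cover_def by auto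
  next
    fix y assume "y \<in> Y - h ` A"
    then obtain x where "x \<in> X" "x \<notin> A" "y = h x" using Y by auto
    then show "cover_mult (image_mset (image h) C) y = k"
      using cover_mult_image[OF inj sub] assms(2,3) unfolding exact_cover_def by auto
  qed
qed

definition bnd :: "nat set \<Rightarrow> nat set \<Rightarrow> nat" where
  "bnd A \<Omega> = (SOME b. \<forall>n k C. exact_cover n k A \<Omega> C \<longrightarrow> \<not> decomposable n k A \<Omega> C \<longrightarrow> n \<le> b \<and> k \<le> b)"

theorem mainTheorem4:
  "\<exists>B :: nat \<Rightarrow> nat. \<forall>(\<Omega> :: 'a set) A n k C.
      finite \<Omega> \<longrightarrow> A \<subseteq> \<Omega> \<longrightarrow> A \<noteq> {} \<longrightarrow> exact_cover n k A \<Omega> C \<longrightarrow>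
      (n > B (card \<Omega>) \<or> k > B (card \<Omega>)) \<longrightarrow> decomposable n k A \<Omega> C"
proof (rule exI[of _ "\<lambda>m. \<Sum>A'\<in>Pow {0..<m}. bnd A' {0..<m}"], intro allI impI)
  fix \<Omega> :: "'a set" and A n k C
  assume fin: "finite \<Omega>" and AO: "A \<subseteq> \<Omega>" and Ane: "A \<noteq> {}" and ex: "exact_cover n k A \<Omega> C"
    and big: "n > (\<Sum>A'\<in>Pow {0..<card \<Omega>}. bnd A' {0..<card \<Omega>})
            \<or> k > (\<Sum>A'\<in>Pow {0..<card \<Omega>}. bnd A' {0..<card \<Omega>})"
  define m where "m = card \<Omega>"
  obtain h where h: "bij_betw h \<Omega> {0..<m}" using ex_bij_betw_finite_nat[OF fin] m_def by blast
  define A' where "A' = h ` A"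
  define C' where "C' = image_mset (image h) C"
  have ex': "exact_cover n k A' {0..<m} C'" unfolding A'_def C'_def by (rule transfer[OF h AO ex])
  have A'sub: "A' \<in> Pow {0..<m}" using h AO unfolding A'_def bij_betw_def by auto
  have A'ne: "A' \<noteq> {}" using Ane unfolding A'_def by auto
  have bprop: "\<forall>n k C. exact_cover n k A' {0..<m} C \<longrightarrow> \<not> decomposable n k A' {0..<m} C \<longrightarrow>
      n \<le> bnd A' {0..<m} \<and> k \<le> bnd A' {0..<m}"
    unfolding bnd_def by (rule someI_ex) (rule core[OF _ A'ne], simp)
  have "bnd A' {0..<m} \<le> (\<Sum>A'\<in>Pow {0..<m}. bnd A' {0..<m})"
    by (rule member_le_sum[OF A'sub]) auto
  then have "decomposable n k A' {0..<m} C'"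
    using bprop ex' big unfolding m_def[symmetric] by fastforce
  then obtain C1 C2 n1 n2 k1 k2 where d: "C' = C1 + C2" "C1 \<noteq> {#}" "C2 \<noteq> {#}"
    "exact_cover n1 k1 A' {0..<m} C1" "exact_cover n2 k2 A' {0..<m} C2" "n = n1 + n2" "k = k1 + k2"
    unfolding decomposable_def by blast
  define g where "g = inv_into \<Omega> h"
  have g: "bij_betw g {0..<m} \<Omega>" unfolding g_def using h by (rule bij_betw_inv_into)
  have inj: "inj_on h \<Omega>" using h by (simp add: bij_betw_def)
  have gA: "g ` A' = A" unfolding g_def A'_def using inj AO by simp
  have A'sub2: "A' \<subseteq> {0..<m}" using A'sub by simp
  have sub: "\<forall>S\<in>#C. S \<subseteq> \<Omega>" using ex unfolding exact_cover_def by auto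
  have "image_mset (image g) C' = image_mset (\<lambda>S. S) C"
    unfolding C'_def multiset.map_comp
    by (rule image_mset_cong) (use sub inj in \<open>auto simp: g_def\<close>)
  then have CC: "C = image_mset (image g) C1 + image_mset (image g) C2" using d(1) by simp
  show "decomposable n k A \<Omega> C"
    unfolding decomposable_def
    apply (rule exI[of _ "image_mset (image g) C1"], rule exI[of _ "image_mset (image g) C2"],
        rule exI[of _ n1], rule exI[of _ n2], rule exI[of _ k1], rule exI[of _ k2])
    using CC d transfer[OF g A'sub2 d(4)] transfer[OF g A'sub2 d(5)] gA by auto
qed

end
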